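(* For every nonnegative integer $n$, $$\sum_{k=0}^{\infty}(-1)^k(4k+1)\,\frac{(-n)_k\,(-3n-1)_k\,(\tfrac12)_k}{k!\,(n+\tfrac32)_k\,(3n+\tfrac52)_k}=\left(\frac{3^3}{2^8}\right)^n\frac{(\tfrac76)_n(\tfrac56)_n(\tfrac32)_n^2}{(\tfrac58)_n(\tfrac78)_n(\tfrac98)_n(\tfrac{11}{8})_n}.$$ (The sum is finite, since $(-n)_k=0$ for $k>n$.)
   Context: $(a)_j=\Gamma(a+j)/\Gamma(a)=a(a+1)\cdots(a+j-1)$ denotes the rising factorial (Pochhammer symbol), with $(a)_0=1$. *)

theory Defs
  imports "HOL-Analysis.Analysis"
begin

end

theory Submission
  imports Defs
begin

lemma poch_shift:
  fixes a b :: real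
  assumes "b = a - 1"
  shows "b * pochhammer a k = (b + of_nat k) * pochhammer b k"
proof -
  have "pochhammer b (Suc k) = b * pochhammer (b + 1) k"
    by (rule pochhammer_rec)
  moreover have "pochhammer b (Suc k) = (b + of_nat k) * pochhammer b k"
    by (rule pochhammer_rec')
  ultimately show ?thesis using assms by simp
qed

definition Qf :: "real \<Rightarrow> real \<Rightarrow> real" where
  "Qf x k =
     (-33880 - 235096*x - 670088*x^2 - 1004504*x^3 - 835632*x^4 - 365952*x^5 - 65952*x^6)
   + (-3852 - 17144*x - 28552*x^2 - 21056*x^3 - 5808*x^4) * k
   + (7488 + 33840*x + 56856*x^2 + 42112*x^3 + 11616*x^4) * k^2
   + (860 + 1792*x + 992*x^2) * k^3
   + (-840 - 1792*x - 992*x^2) * k^4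
   - 48 * k^5 + 32 * k^6"

lemma poly_id:
  fixes x k :: real
  shows "16*(3*(8*x+5)*(8*x+7)*(8*x+9)*(8*x+11)*(x+1)^2*(3*x+2)*(3*x+4)*(4*k+1))
     + 16*((4*k+1)*(x+1-k)*(k-3*x-4)*(k-3*x-3)*(k-3*x-2)*(2*k+2*x+3)*(2*k+6*x+5)*(2*k+6*x+7)*(2*k+6*x+9))
   = -8*((k-x-1)*(k-3*x-4)*(2*k+1))*Qf x (k+1) - 4*(k*(2*k+2*x+3)*(2*k+6*x+9))*Qf x k"
  unfolding Qf_def by algebra

definition Tm :: "nat \<Rightarrow> nat \<Rightarrow> real" where
  "Tm n k = (-1) ^ k * (4 * real k + 1) *
            (pochhammer (- real n) k * pochhammer (- 3 * real n - 1) k * pochhammer (1/2) k)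
            / (fact k * pochhammer (real n + 3/2) k * pochhammer (3 * real n + 5/2) k)"

definition Bf :: "real \<Rightarrow> nat \<Rightarrow> real" where
  "Bf x k = (-1) ^ k * (pochhammer (- x - 1) k * pochhammer (- 3 * x - 4) k * pochhammer (1/2) k)
            / (fact k * pochhammer (x + 5/2) k * pochhammer (3 * x + 11/2) k)"

definition Gf :: "real \<Rightarrow> nat \<Rightarrow> real" where
  "Gf x k = Bf x k * (real k * (2 * real k + 2 * x + 3) * (2 * real k + 6 * x + 9)) * Qf x (real k) / 4"

lemma stepA: "Tm (Suc n) k = (4 * real k + 1) * Bf (real n) k"
proof -
  have e1: "- real (Suc n) = - real n - 1" by simp
  have e2: "- 3 * real (Suc n) - 1 = - 3 * real n - 4" by simp
  have e3: "real (Suc n) + 3/2 = real n + 5/2" by simp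
  have e4: "3 * real (Suc n) + 5/2 = 3 * real n + 11/2" by simp
  show ?thesis unfolding Tm_def Bf_def e1 e2 e3 e4 by simp
qed

lemma gen: fixes A c a1 a2 b1 b2 n1 n2 n3 f e1 e2 :: real
  assumes "b1 \<noteq> 0" "b2 \<noteq> 0"
  shows "A*c*((n1*a1) * (n2*a2) * n3)/(f*(e1*b1)*(e2*b2)) = A*(n1*n2*n3)/(f*e1*e2) * (c*a1*a2/(b1*b2))"
  using assms by (simp add: field_simps)
lemma gen2: fixes p u vv w z s t y q :: real
  assumes "vv \<noteq> 0" "z \<noteq> 0" "s \<noteq> 0" "t \<noteq> 0" "y \<noteq> 0" "q \<noteq> 0"
  shows "p*(u/vv)*(w/z)/((s/t)*(y/q)) = (p*u*w*t*q)/(vv*z*(s*y))"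
  using assms by (simp add: field_simps)
lemma aux:
  fixes x k :: real
  assumes "x \<ge> 0" "k \<ge> 0"
  shows "(4 * k + 1) * ((-x-1 + k) / (-x-1)) * ((-3*x-2 + k)*(-3*x-3 + k)*(-3*x-4 + k)
        / ((-3*x-2)*(-3*x-3)*(-3*x-4)))
            / (((x+3/2) / (x+3/2 + k)) * ((3*x+5/2)*(3*x+7/2)*(3*x+9/2)
       / ((3*x+5/2 + k)*(3*x+7/2 + k)*(3*x+9/2 + k))))
   = ((4*k+1)*(x+1-k)*(k-3*x-4)*(k-3*x-3)*(k-3*x-2)
        *(2*k+2*x+3)*(2*k+6*x+5)*(2*k+6*x+7)*(2*k+6*x+9))
      / (-(x+1)*(3*x+4)*(3*x+3)*(3*x+2)*(2*x+3)*(6*x+5)*(6*x+7)*(6*x+9))"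
proof -
  have ne: "x+1 \<noteq> 0" "3*x+4 \<noteq> 0" "3*x+3 \<noteq> 0" "3*x+2\<noteq>0" "2*x+3\<noteq>0" "6*x+5\<noteq>0" "6*x+7\<noteq>0" "6*x+9\<noteq>0"
    "x+3/2+k \<noteq> 0" "3*x+5/2+k \<noteq> 0" "3*x+7/2+k \<noteq> 0" "3*x+9/2+k \<noteq> 0"
    "-x-1 \<noteq> 0" "-3*x-2 \<noteq> 0" "-3*x-3 \<noteq> 0" "-3*x-4 \<noteq> 0" "x+3/2 \<noteq> 0" "3*x+5/2 \<noteq> 0" "3*x+7/2 \<noteq> 0" "3*x+9/2 \<noteq> 0"
    using assms by linarith+
  have "(4 * k + 1) * ((-x-1 + k) / (-x-1)) * ((-3*x-2 + k)*(-3*x-3 + k)*(-3*x-4 + k)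
        / ((-3*x-2)*(-3*x-3)*(-3*x-4)))
            / (((x+3/2) / (x+3/2 + k)) * ((3*x+5/2)*(3*x+7/2)*(3*x+9/2)
       / ((3*x+5/2 + k)*(3*x+7/2 + k)*(3*x+9/2 + k))))
   = ((4 * k + 1) * (-x-1 + k) * ((-3*x-2 + k)*(-3*x-3 + k)*(-3*x-4 + k)) * (x+3/2 + k) * ((3*x+5/2 + k)*(3*x+7/2 + k)*(3*x+9/2 + k)))
     / ((-x-1) * ((-3*x-2)*(-3*x-3)*(-3*x-4)) * ((x+3/2) * ((3*x+5/2)*(3*x+7/2)*(3*x+9/2))))"
    by (rule gen2) (use ne in simp_all)
  also have "\<dots> = ((4*k+1)*(x+1-k)*(k-3*x-4)*(k-3*x-3)*(k-3*x-2)
        *(2*k+2*x+3)*(2*k+6*x+5)*(2*k+6*x+7)*(2*k+6*x+9))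
      / (-(x+1)*(3*x+4)*(3*x+3)*(3*x+2)*(2*x+3)*(6*x+5)*(6*x+7)*(6*x+9))"
  proof (rule frac_eq_eq[THEN iffD2])
    show "(-x-1) * ((-3*x-2)*(-3*x-3)*(-3*x-4)) * ((x+3/2) * ((3*x+5/2)*(3*x+7/2)*(3*x+9/2))) \<noteq> 0" using ne by simp
    show "-(x+1)*(3*x+4)*(3*x+3)*(3*x+2)*(2*x+3)*(6*x+5)*(6*x+7)*(6*x+9) \<noteq> 0" using ne by simp
  qed algebra
  finally show ?thesis .
qed
lemma stepB:
  fixes n k :: nat
  defines "x \<equiv> real n"
  shows "Tm n k = Bf x k * ((4*real k+1)*(x+1-real k)*(real k-3*x-4)*(real k-3*x-3)*(real k-3*x-2)
        *(2*real k+2*x+3)*(2*real k+6*x+5)*(2*real k+6*x+7)*(2*real k+6*x+9))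
      / (-(x+1)*(3*x+4)*(3*x+3)*(3*x+2)*(2*x+3)*(6*x+5)*(6*x+7)*(6*x+9))"
proof -
  have x0: "x \<ge> 0" unfolding x_def by simp
  have R1: "(-x-1) * pochhammer (-x) k = (-x-1 + real k) * pochhammer (-x-1) k"
    by (rule poch_shift) simp
  have R2: "(-3*x-2) * pochhammer (-3*x-1) k = (-3*x-2 + real k) * pochhammer (-3*x-2) k"
    by (rule poch_shift) simp
  have R3: "(-3*x-3) * pochhammer (-3*x-2) k = (-3*x-3 + real k) * pochhammer (-3*x-3) k"
    by (rule poch_shift) simp
  have R4: "(-3*x-4) * pochhammer (-3*x-3) k = (-3*x-4 + real k) * pochhammer (-3*x-4) k"
    by (rule poch_shift) simp
  have R5: "(x+3/2) * pochhammer (x+5/2) k = (x+3/2 + real k) * pochhammer (x+3/2) k"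
    by (rule poch_shift) simp
  have R6: "(3*x+5/2) * pochhammer (3*x+7/2) k = (3*x+5/2 + real k) * pochhammer (3*x+5/2) k"
    by (rule poch_shift) simp
  have R7: "(3*x+7/2) * pochhammer (3*x+9/2) k = (3*x+7/2 + real k) * pochhammer (3*x+7/2) k"
    by (rule poch_shift) simp
  have R8: "(3*x+9/2) * pochhammer (3*x+11/2) k = (3*x+9/2 + real k) * pochhammer (3*x+9/2) k"
    by (rule poch_shift) simp
  have o1: "pochhammer (-x) k = pochhammer (-x-1) k * ((-x-1 + real k) / (-x-1))"
    using R1 x0 by (simp add: field_simps)
  have o2a: "pochhammer (-3*x-1) k = (-3*x-2 + real k) * pochhammer (-3*x-2) k / (-3*x-2)"
    using R2 x0 by (simp add: field_simps)
  have o2b: "pochhammer (-3*x-2) k = (-3*x-3 + real k) * pochhammer (-3*x-3) k / (-3*x-3)"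
    using R3 x0 by (simp add: field_simps)
  have o2c: "pochhammer (-3*x-3) k = (-3*x-4 + real k) * pochhammer (-3*x-4) k / (-3*x-4)"
    using R4 x0 by (simp add: field_simps)
  have o2: "pochhammer (-3*x-1) k = pochhammer (-3*x-4) k * ((-3*x-2 + real k)*(-3*x-3 + real k)*(-3*x-4 + real k)
        / ((-3*x-2)*(-3*x-3)*(-3*x-4)))"
    unfolding o2a o2b o2c by (simp add: mult_ac)
  have p1: "pochhammer (x+5/2) k > 0" by (rule pochhammer_pos) (use x0 in simp)
  have p2: "pochhammer (3*x+11/2) k > 0" by (rule pochhammer_pos) (use x0 in simp)
  have d1: "pochhammer (x+3/2) k = pochhammer (x+5/2) k * ((x+3/2) / (x+3/2 + real k))"
    using R5 x0 by (simp add: field_simps)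
  have d2a: "pochhammer (3*x+5/2) k = (3*x+5/2) * pochhammer (3*x+7/2) k / (3*x+5/2 + real k)"
    using R6 x0 by (simp add: field_simps)
  have d2b: "pochhammer (3*x+7/2) k = (3*x+7/2) * pochhammer (3*x+9/2) k / (3*x+7/2 + real k)"
    using R7 x0 by (simp add: field_simps)
  have d2c: "pochhammer (3*x+9/2) k = (3*x+9/2) * pochhammer (3*x+11/2) k / (3*x+9/2 + real k)"
    using R8 x0 by (simp add: field_simps)
  have d2: "pochhammer (3*x+5/2) k = pochhammer (3*x+11/2) k * ((3*x+5/2)*(3*x+7/2)*(3*x+9/2)
       / ((3*x+5/2 + real k)*(3*x+7/2 + real k)*(3*x+9/2 + real k)))"
    unfolding d2a d2b d2c by (simp add: mult_ac)
  have fk: "fact k > (0::real)" by simp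
  have T: "Tm n k = (-1) ^ k * (4 * real k + 1) *
            (pochhammer (- x) k * pochhammer (- 3 * x - 1) k * pochhammer (1/2) k)
            / (fact k * pochhammer (x + 3/2) k * pochhammer (3 * x + 5/2) k)"
    unfolding Tm_def x_def by simp
  have ne: "x+3/2 \<noteq> 0" "x+3/2 + real k \<noteq> 0" "3*x+5/2 \<noteq> 0" "3*x+7/2 \<noteq> 0" "3*x+9/2 \<noteq> 0"
     "3*x+5/2 + real k \<noteq> 0" "3*x+7/2 + real k \<noteq> 0" "3*x+9/2 + real k \<noteq> 0"
    using x0 by linarith+
  have "Tm n k = Bf x k * ((4 * real k + 1) * ((-x-1 + real k) / (-x-1)) * ((-3*x-2 + real k)*(-3*x-3 + real k)*(-3*x-4 + real k)
        / ((-3*x-2)*(-3*x-3)*(-3*x-4)))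
            / (((x+3/2) / (x+3/2 + real k)) * ((3*x+5/2)*(3*x+7/2)*(3*x+9/2)
       / ((3*x+5/2 + real k)*(3*x+7/2 + real k)*(3*x+9/2 + real k)))))"
    unfolding T o1 o2 d1 d2 Bf_def
    by (rule gen) (use ne in simp_all)
  also have "\<dots> = Bf x k * ((4*real k+1)*(x+1-real k)*(real k-3*x-4)*(real k-3*x-3)*(real k-3*x-2)
        *(2*real k+2*x+3)*(2*real k+6*x+5)*(2*real k+6*x+7)*(2*real k+6*x+9))
      / (-(x+1)*(3*x+4)*(3*x+3)*(3*x+2)*(2*x+3)*(6*x+5)*(6*x+7)*(6*x+9))"
    using aux[of x "real k"] x0 by simp
  finally show ?thesis .
qed

lemma lin16:
  fixes A P U V Q1 Q0 :: real
  assumes "16*A + 16*P = -8*U*Q1 - 4*V*Q0"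
  shows "A + P = -(U*Q1)/2 - V*Q0/4"
  using assms by (simp add: field_simps)
lemma gen3: fixes c u1 u2 u3 w1 w2 w3 w4 P1 P2 P3 Q1 Q2 Q3 Q4 d :: real
  assumes "w1\<noteq>0" "w2\<noteq>0" "w3\<noteq>0" "w4\<noteq>0"
  shows "d * c * ((u1 * P1) * (u2*P2) * (u3*P3)^2) / ((w1*Q1)*(w2*Q2)*(w3*Q3)*(w4*Q4))
     = c * (P1*P2*P3^2)/(Q1*Q2*Q3*Q4) * (d*u1*u2*u3^2/(w1*w2*w3*w4))"
  using assms by (simp add: field_simps power2_eq_square)
lemma ratio: fixes x :: real assumes "x \<ge> 0"
  shows "(3^3/2^8) * (7/6 + x) * (5/6 + x) * (3/2+x)^2 / ((5/8+x)*(7/8+x)*(9/8+x)*(11/8+x))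
   = (9*(6*x+7)*(6*x+5)*(2*x+3)^2*(x+1)^2*(3*x+2)*(3*x+4)) / (3*(8*x+5)*(8*x+7)*(8*x+9)*(8*x+11)*(x+1)^2*(3*x+2)*(3*x+4))"
proof (rule frac_eq_eq[THEN iffD2])
  show "(5/8+x)*(7/8+x)*(9/8+x)*(11/8+x) \<noteq> 0" using assms by (simp add: add_nonneg_pos)
  show "3*(8*x+5)*(8*x+7)*(8*x+9)*(8*x+11)*(x+1)^2*(3*x+2)*(3*x+4) \<noteq> 0" using assms by (simp add: add_nonneg_pos)
qed algebra

lemma gen4: fixes A n1 n2 n3 f e1 e2 u1 u2 u3 w1 w2 kk :: real
  assumes "kk \<noteq> 0" "w1 \<noteq> 0" "w2 \<noteq> 0"
  shows "(-1 * A) * ((u1 * n1) * (u2 * n2) * (u3 * n3)) / ((kk * f) * (w1 * e1) * (w2 * e2))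
    = A * (n1*n2*n3)/(f*e1*e2) * (-(u1*u2*u3)/(kk*w1*w2))"
  using assms by (simp add: field_simps)

lemma gen5: fixes B u1 u2 u3 kk w1 w2 v1 v2 Q :: real
  assumes "kk \<noteq> 0" "w1 \<noteq> 0" "w2 \<noteq> 0" "v1 = 2*w1" "v2 = 2*w2"
  shows "B*(-(u1*u2*u3)/(kk*w1*w2)) * (kk * v1 * v2) * Q/4 = -(B*(u1*u2*(2*u3)*Q))/2"
  using assms by (simp add: field_simps)

lemma stepC:
  fixes x :: real and k :: nat
  assumes x0: "x \<ge> 0"
  shows "Gf x (Suc k) = - (Bf x k * ((real k - x - 1)*(real k - 3*x - 4)*(2*real k+1)*Qf x (real (Suc k)))) / 2"
proof -
  have ne: "real k + 1 \<noteq> 0" "x + 5/2 + real k \<noteq> 0" "3*x + 11/2 + real k \<noteq> 0" using x0 by linarith+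
  have "Bf x (Suc k) = Bf x k * (-((-x-1 + real k)*(-3*x-4 + real k)*(1/2 + real k))/(real (Suc k)*(x + 5/2 + real k)*(3*x + 11/2 + real k)))"
    unfolding Bf_def pochhammer_rec' fact_Suc power_Suc
    by (rule gen4) (use ne in simp_all)
  hence "Gf x (Suc k) = Bf x k * (-((-x-1 + real k)*(-3*x-4 + real k)*(1/2 + real k))/(real (Suc k)*(x + 5/2 + real k)*(3*x + 11/2 + real k)))
     * (real (Suc k) * (2 * real (Suc k) + 2 * x + 3) * (2 * real (Suc k) + 6 * x + 9)) * Qf x (real (Suc k)) / 4"
    unfolding Gf_def by simp
  also have "\<dots> = - (Bf x k * ((-x-1 + real k)*(-3*x-4 + real k)*(2*(1/2 + real k))*Qf x (real (Suc k)))) / 2"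
    by (rule gen5) (use ne in simp_all)
  also have "(-x-1 + real k)*(-3*x-4 + real k)*(2*(1/2 + real k)) = (real k - x - 1)*(real k - 3*x - 4)*(2*real k+1)"
    by (simp add: algebra_simps)
  finally show ?thesis .
qed

lemma stepT:
  fixes n k :: nat
  defines "x \<equiv> real n"
  shows "(3*(8*x+5)*(8*x+7)*(8*x+9)*(8*x+11)*(x+1)^2*(3*x+2)*(3*x+4)) * Tm (Suc n) k
       - (9*(6*x+7)*(6*x+5)*(2*x+3)^2*(x+1)^2*(3*x+2)*(3*x+4)) * Tm n k
       = Gf x (Suc k) - Gf x k"
proof -
  have x0: "x \<ge> 0" unfolding x_def by simp
  define K where "K = real k"
  define Pint where "Pint = (4*K+1)*(x+1-K)*(K-3*x-4)*(K-3*x-3)*(K-3*x-2)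
        *(2*K+2*x+3)*(2*K+6*x+5)*(2*K+6*x+7)*(2*K+6*x+9)"
  define Cint where "Cint = -(x+1)*(3*x+4)*(3*x+3)*(3*x+2)*(2*x+3)*(6*x+5)*(6*x+7)*(6*x+9)"
  define a3 where "a3 = 3*(8*x+5)*(8*x+7)*(8*x+9)*(8*x+11)*(x+1)^2*(3*x+2)*(3*x+4)"
  have cne: "Cint \<noteq> 0" unfolding Cint_def using x0 by (simp add: add_nonneg_pos)
  have bC: "9*(6*x+7)*(6*x+5)*(2*x+3)^2*(x+1)^2*(3*x+2)*(3*x+4) = - Cint"
    unfolding Cint_def by algebra
  have TB: "Tm n k = Bf x k * Pint / Cint" unfolding Pint_def Cint_def K_def x_def by (rule stepB)
  have TA: "Tm (Suc n) k = (4*K+1) * Bf x k" unfolding K_def x_def by (rule stepA)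
  have PI0: "a3 * (4*K+1) + Pint = -((K-x-1)*(K-3*x-4)*(2*K+1)*Qf x (K+1))/2 - K*(2*K+2*x+3)*(2*K+6*x+9)*Qf x K/4"
    unfolding a3_def Pint_def by (rule lin16) (rule poly_id)
  have e: "K + 1 = real (Suc k)" by (simp add: K_def)
  have PI: "a3 * (4*K+1) + Pint = -((K-x-1)*(K-3*x-4)*(2*K+1)*Qf x (real (Suc k)))/2 - K*(2*K+2*x+3)*(2*K+6*x+9)*Qf x K/4"
    using PI0 unfolding e .
  have GS: "Gf x (Suc k) = - (Bf x k * ((K - x - 1)*(K - 3*x - 4)*(2*K+1)*Qf x (real (Suc k)))) / 2"
    unfolding K_def by (rule stepC[OF x0])
  have G0: "Gf x k = Bf x k * (K * (2 * K + 2 * x + 3) * (2 * K + 6 * x + 9)) * Qf x K / 4"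
    unfolding K_def Gf_def ..
  have "a3 * Tm (Suc n) k - (- Cint) * Tm n k = Bf x k * (a3 * (4*K+1) + Pint)"
    unfolding TA TB using cne by (simp add: field_simps)
  also have "\<dots> = Gf x (Suc k) - Gf x k"
    unfolding PI GS G0 by (simp add: algebra_simps)
  finally show ?thesis unfolding a3_def bC .
qed

lemma Tm_zero: "n < k \<Longrightarrow> Tm n k = 0"
  unfolding Tm_def by (simp add: pochhammer_of_nat_eq_0_iff)

lemma sumsT: "n < N \<Longrightarrow> Tm n sums (\<Sum>k<N. Tm n k)"
  by (rule sums_finite) (auto intro: Tm_zero)

lemma Gf_end: "Gf (real n) (n + 2) = 0"
proof -
  have e: "- real n - 1 = - of_nat (Suc n)" by simp
  have "pochhammer (- of_nat (Suc n)) (n+2) = (0::real)"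
    by (subst pochhammer_of_nat_eq_0_iff) simp
  hence "pochhammer (- real n - 1) (n+2) = (0::real)" unfolding e .
  thus ?thesis unfolding Gf_def Bf_def by simp
qed

lemma tele:
  fixes n :: nat
  defines "x \<equiv> real n"
  shows "(3*(8*x+5)*(8*x+7)*(8*x+9)*(8*x+11)*(x+1)^2*(3*x+2)*(3*x+4)) * (\<Sum>k<n+2. Tm (Suc n) k)
       - (9*(6*x+7)*(6*x+5)*(2*x+3)^2*(x+1)^2*(3*x+2)*(3*x+4)) * (\<Sum>k<n+2. Tm n k) = 0"
proof -
  have "(3*(8*x+5)*(8*x+7)*(8*x+9)*(8*x+11)*(x+1)^2*(3*x+2)*(3*x+4)) * (\<Sum>k<n+2. Tm (Suc n) k)
       - (9*(6*x+7)*(6*x+5)*(2*x+3)^2*(x+1)^2*(3*x+2)*(3*x+4)) * (\<Sum>k<n+2. Tm n k)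
      = (\<Sum>k<n+2. Gf x (Suc k) - Gf x k)"
    unfolding sum_distrib_left sum_subtractf[symmetric] x_def by (rule sum.cong[OF refl]) (rule stepT)
  also have "\<dots> = Gf x (n+2) - Gf x 0" by (rule sum_lessThan_telescope)
  also have "\<dots> = 0" unfolding x_def Gf_end by (simp add: Gf_def)
  finally show ?thesis .
qed

definition Rf :: "nat \<Rightarrow> real" where
  "Rf n = ((3^3 / 2^8) ^ n *
            (pochhammer (7/6) n * pochhammer (5/6) n * (pochhammer (3/2) n)^2)
            / (pochhammer (5/8) n * pochhammer (7/8) n * pochhammer (9/8) n * pochhammer (11/8) n))"

lemma Rf_Suc:
  fixes n :: nat
  defines "x \<equiv> real n"
  shows "Rf (Suc n) = Rf n * ((9*(6*x+7)*(6*x+5)*(2*x+3)^2*(x+1)^2*(3*x+2)*(3*x+4)) / (3*(8*x+5)*(8*x+7)*(8*x+9)*(8*x+11)*(x+1)^2*(3*x+2)*(3*x+4)))"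
proof -
  have x0: "x \<ge> 0" unfolding x_def by simp
  have "Rf (Suc n) = Rf n * ((3^3/2^8) * (7/6 + x) * (5/6 + x) * (3/2+x)^2 / ((5/8+x)*(7/8+x)*(9/8+x)*(11/8+x)))"
    unfolding Rf_def pochhammer_rec' power_Suc x_def
    by (rule gen3) (simp_all add: add_nonneg_pos)
  also have "\<dots> = Rf n * ((9*(6*x+7)*(6*x+5)*(2*x+3)^2*(x+1)^2*(3*x+2)*(3*x+4)) / (3*(8*x+5)*(8*x+7)*(8*x+9)*(8*x+11)*(x+1)^2*(3*x+2)*(3*x+4)))"
    using ratio[OF x0] by simp
  finally show ?thesis .
qed

lemma main: "Tm n sums Rf n"
proof (induction n)
  case 0
  have "Tm 0 sums (\<Sum>k<1. Tm 0 k)" by (rule sumsT) simp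
  moreover have "(\<Sum>k<1. Tm 0 k) = Rf 0" by (simp add: Tm_def Rf_def)
  ultimately show ?case by simp
next
  case (Suc n)
  define x where "x = real n"
  have x0: "x \<ge> 0" unfolding x_def by simp
  have V: "(\<Sum>k<n+2. Tm n k) = Rf n"
    using sums_unique2[OF sumsT[of n "n+2"] Suc.IH] by simp
  have a0: "3*(8*x+5)*(8*x+7)*(8*x+9)*(8*x+11)*(x+1)^2*(3*x+2)*(3*x+4) \<noteq> 0"
    using x0 by (simp add: add_nonneg_pos)
  have "(\<Sum>k<n+2. Tm (Suc n) k) = Rf (Suc n)"
    using tele[of n] a0 unfolding Rf_Suc x_def[symmetric] V by (simp add: field_simps)
  moreover have "Tm (Suc n) sums (\<Sum>k<n+2. Tm (Suc n) k)" by (rule sumsT) simp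
  ultimately show ?case by simp
qed

theorem theorem4:
  fixes n :: nat
  shows "(\<lambda>k. (-1) ^ k * (4 * real k + 1) *
            (pochhammer (- real n) k * pochhammer (- 3 * real n - 1) k * pochhammer (1/2) k)
            / (fact k * pochhammer (real n + 3/2) k * pochhammer (3 * real n + 5/2) k))
         sums ((3^3 / 2^8) ^ n *
            (pochhammer (7/6) n * pochhammer (5/6) n * (pochhammer (3/2) n)^2)
            / (pochhammer (5/8) n * pochhammer (7/8) n * pochhammer (9/8) n * pochhammer (11/8) n))"
  using main[of n] unfolding Tm_def[abs_def] Rf_def .

end
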